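(* Let $t\ge3$ and let $p_1,\dots,p_t$ be distinct primes, $n=p_1p_2\cdots p_t$. Then $i(X_n)\le 4p_1p_2\cdots p_{t-3}$ (the empty product being $1$ when $t=3$).
   Context: $X_n$ is the graph on $\{0,\dots,n-1\}$ with $a,b$ adjacent iff $\gcd(a-b,n)=1$. $i(G)$ is the minimum size of a maximal (under inclusion) independent set of $G$. *)

theory Defs
  imports Main "HOL-Computational_Algebra.Primes"
begin

definition X_adj :: "nat \<Rightarrow> nat \<Rightarrow> nat \<Rightarrow> bool" where
  "X_adj n a b \<longleftrightarrow> gcd (int a - int b) (int n) = 1"

definition X_verts :: "nat \<Rightarrow> nat set" where
  "X_verts n = {0..<n}"

definition indep_set :: "'a set \<Rightarrow> ('a \<Rightarrow> 'a \<Rightarrow> bool) \<Rightarrow> 'a set \<Rightarrow> bool" where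
  "indep_set V E S \<longleftrightarrow> S \<subseteq> V \<and> (\<forall>a\<in>S. \<forall>b\<in>S. a \<noteq> b \<longrightarrow> \<not> E a b)"

definition maximal_indep_set :: "'a set \<Rightarrow> ('a \<Rightarrow> 'a \<Rightarrow> bool) \<Rightarrow> 'a set \<Rightarrow> bool" where
  "maximal_indep_set V E S \<longleftrightarrow> indep_set V E S \<and>
     (\<forall>T. indep_set V E T \<and> S \<subseteq> T \<longrightarrow> T = S)"

definition indep_dom_num :: "'a set \<Rightarrow> ('a \<Rightarrow> 'a \<Rightarrow> bool) \<Rightarrow> nat" where
  "indep_dom_num V E = Min (card ` {S. maximal_indep_set V E S})"

end

theory Submission
  imports Defs "HOL-Number_Theory.Cong"
begin

lemma card_class:
  fixes A :: "nat set"
  assumes "Q > 0" "\<forall>x\<in>A. x < m*Q" "\<forall>x\<in>A. \<forall>y\<in>A. x mod Q = y mod Q"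
  shows "card A \<le> m"
proof -
  have inj: "inj_on (\<lambda>x. x div Q) A"
  proof (rule inj_onI)
    fix x y assume "x \<in> A" "y \<in> A" "x div Q = y div Q"
    then show "x = y" using assms(3) by (metis div_mult_mod_eq)
  qed
  have "(\<lambda>x. x div Q) ` A \<subseteq> {..<m}"
    using assms(1,2) by (auto simp: div_less_iff_less_mult)
  then have "card A \<le> card {..<m}"
    using card_inj_on_le[OF inj] by blast
  then show ?thesis by simp
qed

lemma coprime_from_primes:
  fixes d :: int
  assumes "\<forall>i\<in>I. prime (p i)" "\<forall>i\<in>I. \<not> int (p i) dvd d"
  shows "gcd d (int (\<Prod>i\<in>I. p i)) = 1"
proof -
  have "coprime d (\<Prod>i\<in>I. int (p i))"
  proof (rule prod_coprime_right)
    fix i assume "i \<in> I"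
    then have "prime (int (p i))" "\<not> int (p i) dvd d" using assms by auto
    then show "coprime d (int (p i))" using prime_imp_coprime coprime_commute by blast
  qed
  then show ?thesis by (simp add: coprime_iff_gcd_eq_1)
qed

definition Pats :: "(nat \<times> nat \<times> nat) set" where
  "Pats = {(0,0,0),(0,1,1),(1,0,1),(1,1,0)}"

lemma Pats_agree:
  "\<pi> \<in> Pats \<Longrightarrow> \<sigma> \<in> Pats \<Longrightarrow> fst \<pi> = fst \<sigma> \<or> fst (snd \<pi>) = fst (snd \<sigma>) \<or> snd (snd \<pi>) = snd (snd \<sigma>)"
  unfolding Pats_def by auto

lemma Pats_avoid:
  assumes "(\<alpha>,\<beta>,\<gamma>) \<notin> Pats"
  shows "\<exists>\<pi>\<in>Pats. fst \<pi> \<noteq> \<alpha> \<and> fst (snd \<pi>) \<noteq> \<beta> \<and> snd (snd \<pi>) \<noteq> \<gamma>"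
  using assms unfolding Pats_def by auto

lemma Pats_small: "\<pi> \<in> Pats \<Longrightarrow> fst \<pi> \<le> 1 \<and> fst (snd \<pi>) \<le> 1 \<and> snd (snd \<pi>) \<le> 1"
  unfolding Pats_def by auto

lemma card_Pats: "card Pats = 4"
  unfolding Pats_def by simp

lemma nodvd_mod:
  fixes x y q :: nat
  assumes "int q dvd int x - int y"
  shows "x mod q = y mod q"
proof -
  have "int x mod int q = int y mod int q" using assms by (simp add: mod_eq_dvd_iff)
  then show ?thesis by (metis of_nat_mod of_nat_eq_iff)
qed

lemma mod_dvd_int:
  fixes x y q :: nat
  assumes "x mod q = y mod q"
  shows "int q dvd int x - int y"
proof -
  have "int x mod int q = int y mod int q" using assms by (metis of_nat_mod)
  then show ?thesis by (simp add: mod_eq_dvd_iff)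
qed

theorem theorem4p10:
  fixes t n :: nat and p :: "nat \<Rightarrow> nat"
  assumes "t \<ge> 3"
    and "\<forall>i\<in>{1..t}. prime (p i)"
    and "inj_on p {1..t}"
    and "n = (\<Prod>i=1..t. p i)"
  shows "indep_dom_num (X_verts n) (X_adj n) \<le> 4 * (\<Prod>i=1..t-3. p i)"
proof -
  obtain k where tk: "t = k + 3" using assms(1) by (metis add.commute le_Suc_ex)
  define a where "a = p (k+1)"
  define b where "b = p (k+2)"
  define c where "c = p (k+3)"
  define m where "m = (\<Prod>i=1..k. p i)"
  have n: "n = m * (a*b*c)"
    unfolding assms(4) tk m_def a_def b_def c_def
    by (simp add: prod.nat_ivl_Suc' mult_ac numeral_3_eq_3 numeral_2_eq_2)
  have pa: "prime a" and pb: "prime b" and pc: "prime c"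
    using assms(2) tk unfolding a_def b_def c_def by auto
  have ab: "a \<noteq> b" and ac: "a \<noteq> c" and bc: "b \<noteq> c"
    using inj_onD[OF assms(3), of "k+1" "k+2"] inj_onD[OF assms(3), of "k+1" "k+3"]
      inj_onD[OF assms(3), of "k+2" "k+3"] tk unfolding a_def b_def c_def by auto
  have pim: "p i \<noteq> a \<and> p i \<noteq> b \<and> p i \<noteq> c" if i: "i \<in> {1..k}" for i
    using inj_onD[OF assms(3), of i "k+1"] inj_onD[OF assms(3), of i "k+2"]
      inj_onD[OF assms(3), of i "k+3"] tk i unfolding a_def b_def c_def by auto
  have cab: "coprime a b" using pa pb ab primes_coprime by blast
  have cabc: "coprime (a*b) c" using pa pb pc ac bc primes_coprime by (simp add: primes_coprime)
  have cm: "coprime (a*b*c) m" unfolding m_def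
  proof (rule prod_coprime_right)
    fix i assume i: "i \<in> {1..k}"
    have "prime (p i)" using assms(2) i tk by auto
    then show "coprime (a*b*c) (p i)" using pim[OF i] pa pb pc by (simp add: primes_coprime)
  qed
  have a2: "a \<ge> 2" and b2: "b \<ge> 2" and c2: "c \<ge> 2" using pa pb pc prime_ge_2_nat by auto
  have m0: "m > 0" unfolding m_def using assms(2) tk
    by (simp add: prime_gt_0_nat)
  have n0: "n > 0" using n m0 a2 b2 c2 by simp
  have Iprime: "\<forall>i\<in>{1..t}. prime (p i)" using assms(2) .
  define S where "S = {x. x < n \<and> (x mod a, x mod b, x mod c) \<in> Pats}"
  define A where "A = (\<lambda>\<pi>. {x\<in>S. (x mod a, x mod b, x mod c) = \<pi>})"
  have SA: "S = (\<Union>\<pi>\<in>Pats. A \<pi>)" unfolding S_def A_def by auto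
  have cardA: "card (A \<pi>) \<le> m" for \<pi>
  proof (rule card_class[where Q="a*b*c"])
    show "0 < a*b*c" using a2 b2 c2 by simp
    show "\<forall>x\<in>A \<pi>. x < m * (a*b*c)" unfolding A_def S_def n by auto
    show "\<forall>x\<in>A \<pi>. \<forall>y\<in>A \<pi>. x mod (a*b*c) = y mod (a*b*c)"
    proof (intro ballI)
      fix x y assume "x \<in> A \<pi>" "y \<in> A \<pi>"
      then have "[x = y] (mod a)" "[x = y] (mod b)" "[x = y] (mod c)"
        unfolding A_def cong_def by auto
      then have "[x = y] (mod a*b*c)" using cab cabc coprime_cong_mult_nat by blast
      then show "x mod (a*b*c) = y mod (a*b*c)" by (simp add: cong_def)
    qed
  qed
  have cardS: "card S \<le> 4 * m"
  proof -
    have "card S \<le> (\<Sum>\<pi>\<in>Pats. card (A \<pi>))" unfolding SA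
      by (rule card_UN_le) (simp add: Pats_def)
    also have "\<dots> \<le> card Pats * m" using cardA sum_bounded_above[of Pats "\<lambda>\<pi>. card (A \<pi>)" m] by simp
    finally show ?thesis by (simp add: card_Pats)
  qed
  have adn: "a dvd n" "b dvd n" "c dvd n" unfolding n by auto
  have nonadj: "\<not> X_adj n x y" if "q \<in> {a,b,c}" "x mod q = y mod q" for x y q
  proof
    assume "X_adj n x y"
    then have g: "gcd (int x - int y) (int n) = 1" by (simp add: X_adj_def)
    have "int q dvd int x - int y" using mod_dvd_int that(2) .
    moreover have "int q dvd int n" using adn that(1) by auto
    ultimately have "int q dvd 1" using g by (metis gcd_greatest)
    then have "q = 1" by simp
    then show False using that(1) a2 b2 c2 by auto
  qed
  have indS: "indep_set (X_verts n) (X_adj n) S"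
    unfolding indep_set_def
  proof (intro conjI ballI impI)
    show "S \<subseteq> X_verts n" unfolding S_def X_verts_def by auto
  next
    fix x y assume "x \<in> S" "y \<in> S" "x \<noteq> y"
    then have "(x mod a, x mod b, x mod c) \<in> Pats" "(y mod a, y mod b, y mod c) \<in> Pats"
      unfolding S_def by auto
    from Pats_agree[OF this] show "\<not> X_adj n x y" using nonadj by auto
  qed
  have maxS: "maximal_indep_set (X_verts n) (X_adj n) S"
    unfolding maximal_indep_set_def
  proof (intro conjI allI impI indS)
    fix T assume T: "indep_set (X_verts n) (X_adj n) T \<and> S \<subseteq> T"
    show "T = S"
    proof (rule ccontr)
      assume "T \<noteq> S"
      then obtain v where v: "v \<in> T" "v \<notin> S" using T by blast
      have vn: "v < n" using T v unfolding indep_set_def X_verts_def by auto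
      then have "(v mod a, v mod b, v mod c) \<notin> Pats" using v unfolding S_def by auto
      from Pats_avoid[OF this] obtain \<alpha> \<beta> \<gamma> where pi: "(\<alpha>,\<beta>,\<gamma>) \<in> Pats"
        "\<alpha> \<noteq> v mod a" "\<beta> \<noteq> v mod b" "\<gamma> \<noteq> v mod c" by auto
      have sm: "\<alpha> < a" "\<beta> < b" "\<gamma> < c" using Pats_small[OF pi(1)] a2 b2 c2 by auto
      obtain x1 where x1: "[x1 = \<alpha>] (mod a)" "[x1 = \<beta>] (mod b)"
        using binary_chinese_remainder_nat[OF cab, of "\<alpha>" "\<beta>"] by blast
      obtain x2 where x2: "[x2 = x1] (mod a*b)" "[x2 = \<gamma>] (mod c)"
        using binary_chinese_remainder_nat[OF cabc, of x1 "\<gamma>"] by blast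
      obtain x3 where x3: "[x3 = x2] (mod a*b*c)" "[x3 = v+1] (mod m)"
        using binary_chinese_remainder_nat[OF cm, of x2 "v+1"] by blast
      define s where "s = x3 mod n"
      have s3: "[s = x3] (mod n)" unfolding s_def cong_def by simp
      have sabc: "[s = x3] (mod a*b*c)" "[s = x3] (mod m)"
        using cong_dvd_modulus_nat[OF s3, of "a*b*c"] cong_dvd_modulus_nat[OF s3, of m]
        unfolding n by simp_all
      have s2: "[s = x2] (mod a*b*c)" using sabc(1) x3(1) by (rule cong_trans)
      have "[s = x2] (mod a*b)" using cong_dvd_modulus_nat[OF s2, of "a*b"] by simp
      then have s1: "[s = x1] (mod a*b)" using x2(1) by (rule cong_trans)
      have "[s = x2] (mod c)" using cong_dvd_modulus_nat[OF s2, of c] by simp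
      then have sg: "[s = \<gamma>] (mod c)" using x2(2) by (rule cong_trans)
      have "[s = x1] (mod a)" using cong_dvd_modulus_nat[OF s1, of a] by simp
      then have sa: "[s = \<alpha>] (mod a)" using x1(1) by (rule cong_trans)
      have "[s = x1] (mod b)" using cong_dvd_modulus_nat[OF s1, of b] by simp
      then have sb: "[s = \<beta>] (mod b)" using x1(2) by (rule cong_trans)
      from sa sb sg
      have smod: "s mod a = \<alpha>" "s mod b = \<beta>" "s mod c = \<gamma>"
        using sm by (auto simp: cong_def)
      have sm1: "[s = v+1] (mod m)" using sabc(2) x3(2) by (rule cong_trans)
      have sn: "s < n" unfolding s_def using n0 by simp
      have "(s mod a, s mod b, s mod c) \<in> Pats" using pi(1) by (simp only: smod)
      then have sS: "s \<in> S" unfolding S_def using sn by blast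
      have sv: "s \<noteq> v" using sS v(2) by metis
      have "gcd (int v - int s) (int n) = 1"
        unfolding assms(4)
      proof (rule coprime_from_primes[OF Iprime], intro ballI notI)
        fix i assume i: "i \<in> {1..t}" and d: "int (p i) dvd int v - int s"
        show False
        proof (cases "i \<le> k")
          case True
          then have "p i dvd m" unfolding m_def using i
            by (intro dvd_prodI) auto
          then have "[s = v+1] (mod p i)" using sm1 cong_dvd_modulus_nat by blast
          then have "int (p i) dvd int s - int (v+1)"
            using mod_dvd_int[of s "p i" "v+1"] by (simp add: cong_def)
          with d have "int (p i) dvd (int v - int s) + (int s - int (v+1))" by (rule dvd_add)
          then have "int (p i) dvd 1" by simp
          then have "p i = 1" by simp
          moreover have "prime (p i)" using Iprime i by blast
          ultimately show False by simp
        next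
          case False
          then have "i = k+1 \<or> i = k+2 \<or> i = k+3" using i tk by auto
          then have "p i = a \<or> p i = b \<or> p i = c" unfolding a_def b_def c_def by auto
          moreover have vs: "v mod p i = s mod p i" using nodvd_mod[OF d] .
          ultimately show False using smod pi(2-4) by metis
        qed
      qed
      then have "X_adj n v s" by (simp add: X_adj_def)
      moreover have "s \<in> T" using sS T by auto
      moreover have "\<forall>x\<in>T. \<forall>y\<in>T. x \<noteq> y \<longrightarrow> \<not> X_adj n x y"
        using T unfolding indep_set_def by (elim conjE)
      ultimately show False using v(1) sv by metis
    qed
  qed
  have fin: "finite {S. maximal_indep_set (X_verts n) (X_adj n) S}"
  proof (rule finite_subset[of _ "Pow {0..<n}"])
    show "{S. maximal_indep_set (X_verts n) (X_adj n) S} \<subseteq> Pow {0..<n}"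
    proof
      fix S' assume "S' \<in> {S. maximal_indep_set (X_verts n) (X_adj n) S}"
      then have "indep_set (X_verts n) (X_adj n) S'" unfolding maximal_indep_set_def by blast
      then have "S' \<subseteq> {0..<n}" unfolding indep_set_def X_verts_def by blast
      then show "S' \<in> Pow {0..<n}" by blast
    qed
  qed simp
  have "indep_dom_num (X_verts n) (X_adj n) \<le> card S"
    unfolding indep_dom_num_def
    by (rule Min_le[OF finite_imageI[OF fin]]) (rule imageI, simp add: maxS)
  with cardS have "indep_dom_num (X_verts n) (X_adj n) \<le> 4 * m" by linarith
  moreover have "m = (\<Prod>i=1..t-3. p i)" unfolding m_def tk by simp
  ultimately show ?thesis by simp
qed

end
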